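(* For every $n\ge1$, the $\{\mathbf{3},\mathbf{2}+\mathbf{2}\}$-free naturally labelled posets on $[n]$ are in bijection with the set $\mathcal B_n$ of bicoloured permutations $\sigma$ of $[n]$ satisfying all of the following: (i) $\sigma(1)$ is blue; (ii) there is no $i$ with $\sigma(i),\sigma(i+1)$ both blue and $\sigma(i)<\sigma(i+1)$; (iii) there is no $i$ with $\sigma(i),\sigma(i+1)$ both red and $\sigma(i)>\sigma(i+1)$; (iv) there are no $i<j$ with $\sigma(i)$ blue, $\sigma(j)$ red and $\sigma(i)>\sigma(j)$.
   Context: A partial order $\preceq$ on $[n]$ is naturally labelled if $x\prec y$ implies $x<y$. It is $\mathbf{3}$-free if there are no $x\prec y\prec z$. It is $(\mathbf{2}+\mathbf{2})$-free if there are no distinct $i\prec j$, $k\prec\ell$ with each of $i,j$ incomparable to each of $k,\ell$. A bicoloured permutation of $[n]$ is a permutation $\sigma$ of $[n]$ in which each entry is coloured either blue or red. *)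

theory Defs
  imports "HOL-Combinatorics.Permutations"
begin

text \<open>A partial order on [n] = {1..n} is represented by its strict part R,
  a set of pairs (x,y) meaning x \<prec> y.\<close>

definition strict_poset_on :: "nat \<Rightarrow> (nat \<times> nat) set \<Rightarrow> bool" where
  "strict_poset_on n R \<longleftrightarrow> R \<subseteq> {1..n} \<times> {1..n} \<and> irrefl R \<and> trans R"

definition naturally_labelled :: "(nat \<times> nat) set \<Rightarrow> bool" where
  "naturally_labelled R \<longleftrightarrow> (\<forall>x y. (x, y) \<in> R \<longrightarrow> x < y)"

definition three_free :: "(nat \<times> nat) set \<Rightarrow> bool" where
  "three_free R \<longleftrightarrow> \<not> (\<exists>x y z. (x, y) \<in> R \<and> (y, z) \<in> R)"

definition incomparable :: "(nat \<times> nat) set \<Rightarrow> nat \<Rightarrow> nat \<Rightarrow> bool" where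
  "incomparable R x y \<longleftrightarrow> (x, y) \<notin> R \<and> (y, x) \<notin> R"

definition two_plus_two_free :: "(nat \<times> nat) set \<Rightarrow> bool" where
  "two_plus_two_free R \<longleftrightarrow> \<not> (\<exists>i j k l. distinct [i, j, k, l] \<and> (i, j) \<in> R \<and> (k, l) \<in> R \<and>
      incomparable R i k \<and> incomparable R i l \<and> incomparable R j k \<and> incomparable R j l)"

definition free_nl_posets :: "nat \<Rightarrow> (nat \<times> nat) set set" where
  "free_nl_posets n = {R. strict_poset_on n R \<and> naturally_labelled R \<and> three_free R \<and> two_plus_two_free R}"

text \<open>A bicoloured permutation of [n] is a pair (\<sigma>, Bl): \<sigma> permutes {1..n}
  (identity outside), and Bl \<subseteq> {1..n} is the set of entries (values) coloured blue;
  the remaining entries of {1..n} are red.  \<sigma> i is the entry at position i.\<close>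

definition bicoloured_perms :: "nat \<Rightarrow> ((nat \<Rightarrow> nat) \<times> nat set) set" where
  "bicoloured_perms n = {(\<sigma>, Bl). \<sigma> permutes {1..n} \<and> Bl \<subseteq> {1..n}}"

definition B_set :: "nat \<Rightarrow> ((nat \<Rightarrow> nat) \<times> nat set) set" where
  "B_set n = {(\<sigma>, Bl). (\<sigma>, Bl) \<in> bicoloured_perms n \<and>
      \<sigma> 1 \<in> Bl \<and>
      (\<forall>i. 1 \<le> i \<and> i + 1 \<le> n \<and> \<sigma> i \<in> Bl \<and> \<sigma> (i + 1) \<in> Bl \<longrightarrow> \<not> \<sigma> i < \<sigma> (i + 1)) \<and>
      (\<forall>i. 1 \<le> i \<and> i + 1 \<le> n \<and> \<sigma> i \<notin> Bl \<and> \<sigma> (i + 1) \<notin> Bl \<longrightarrow> \<not> \<sigma> i > \<sigma> (i + 1)) \<and>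
      (\<forall>i j. 1 \<le> i \<and> i < j \<and> j \<le> n \<and> \<sigma> i \<in> Bl \<and> \<sigma> j \<notin> Bl \<longrightarrow> \<not> \<sigma> i > \<sigma> j)}"

end

theory Submission
  imports Defs "HOL-Library.Product_Lexorder"
begin

lemma consec_mono:
  fixes g :: "nat \<Rightarrow> 'a::order"
  assumes "\<And>i. 1 \<le> i \<Longrightarrow> i + 1 \<le> n \<Longrightarrow> g i < g (i + 1)"
  shows "1 \<le> i \<Longrightarrow> i < j \<Longrightarrow> j \<le> n \<Longrightarrow> g i < g j"
proof (induction j)
  case 0 then show ?case by simp
next
  case (Suc j)
  show ?case
  proof (cases "i = j")
    case True then show ?thesis using assms Suc.prems by auto
  next
    case False
    then have "g i < g j" using Suc by auto
    also have "g j < g (Suc j)" using assms[of j] Suc.prems False by auto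
    finally show ?thesis .
  qed
qed

lemma exists_sorted_perm:
  fixes k :: "nat \<Rightarrow> 'a::linorder"
  assumes inj: "inj_on k {1..n}"
  shows "\<exists>\<sigma>. \<sigma> permutes {1..n} \<and> (\<forall>i j. 1 \<le> i \<longrightarrow> i < j \<longrightarrow> j \<le> n \<longrightarrow> k (\<sigma> i) < k (\<sigma> j))"
proof -
  define pos where "pos x = card {z\<in>{1..n}. k z < k x} + 1" for x
  have mono: "pos x < pos y" if xy: "x\<in>{1..n}" "y\<in>{1..n}" "k x < k y" for x y
  proof -
    have sub: "{z\<in>{1..n}. k z < k x} \<subseteq> {z\<in>{1..n}. k z < k y}"
    proof
      fix z assume "z \<in> {z\<in>{1..n}. k z < k x}"
      then have "z \<in> {1..n}" "k z < k x" by simp_all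
      moreover have "k z < k y" using \<open>k z < k x\<close> xy(3) by (rule less_trans)
      ultimately show "z \<in> {z\<in>{1..n}. k z < k y}" by simp
    qed
    have "x \<in> {z\<in>{1..n}. k z < k y}" "x \<notin> {z\<in>{1..n}. k z < k x}" using xy by simp_all
    then have "{z\<in>{1..n}. k z < k x} \<subset> {z\<in>{1..n}. k z < k y}" using sub by blast
    then have "card {z\<in>{1..n}. k z < k x} < card {z\<in>{1..n}. k z < k y}"
      by (rule psubset_card_mono[rotated]) simp
    then show ?thesis unfolding pos_def by simp
  qed
  have pinj: "inj_on pos {1..n}"
  proof (rule inj_onI)
    fix x y assume xy: "x \<in> {1..n}" "y \<in> {1..n}" "pos x = pos y"
    show "x = y"
    proof (rule ccontr)
      assume "x \<noteq> y"
      have "k x \<noteq> k y" using inj_on_contraD[OF inj \<open>x \<noteq> y\<close> xy(1) xy(2)] .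
      then have "k x < k y \<or> k y < k x" by (simp only: neq_iff)
      then show False
      proof
        assume "k x < k y" then have "pos x < pos y" by (rule mono[OF xy(1,2)])
        then show False unfolding xy(3) by simp
      next
        assume "k y < k x" then have "pos y < pos x" by (rule mono[OF xy(2,1)])
        then show False unfolding xy(3) by simp
      qed
    qed
  qed
  have range1: "pos x \<in> {1..n}" if x: "x \<in> {1..n}" for x
  proof -
    let ?S = "{z\<in>{1..n}. k z < k x}"
    have "?S \<subseteq> {1..n} - {x}"
    proof
      fix z assume "z \<in> ?S"
      then have "z \<in> {1..n}" "k z < k x" by simp_all
      then show "z \<in> {1..n} - {x}" by (auto simp del: atLeastAtMost_iff)
    qed
    then have "card ?S \<le> card ({1..n} - {x})" by (rule card_mono[rotated]) simp
    moreover have "card ({1..n} - {x}) = n - 1" using x by simp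
    moreover have "n \<ge> 1" using x by simp
    ultimately have c: "card ?S + 1 \<le> n" by linarith
    have "card ?S + 1 \<in> {1..n}" using c by simp
    then show ?thesis by (simp only: pos_def)
  qed
  have range: "pos ` {1..n} \<subseteq> {1..n}" using range1 by blast
  have img: "pos ` {1..n} = {1..n}" using endo_inj_surj[OF _ range pinj] by simp
  then have bij: "bij_betw pos {1..n} {1..n}" using pinj by (simp add: bij_betw_def)
  define \<sigma> where "\<sigma> i = (if i \<in> {1..n} then inv_into {1..n} pos i else i)" for i
  have bij2: "bij_betw \<sigma> {1..n} {1..n}"
    using bij_betw_inv_into[OF bij] by (rule bij_betw_cong[THEN iffD1, rotated]) (simp add: \<sigma>_def)
  have perm: "\<sigma> permutes {1..n}"
  proof (rule bij_imp_permutes[OF bij2])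
    fix x assume "x \<notin> {1..n}"
    then show "\<sigma> x = x" unfolding \<sigma>_def by (rule if_not_P)
  qed
  have ps: "pos (\<sigma> i) = i" "\<sigma> i \<in> {1..n}" if "i \<in> {1..n}" for i
  proof -
    have m: "i \<in> pos ` {1..n}" using that unfolding img .
    have e: "\<sigma> i = inv_into {1..n} pos i" unfolding \<sigma>_def using that by (rule if_P)
    show "pos (\<sigma> i) = i" unfolding e by (rule f_inv_into_f[OF m])
    show "\<sigma> i \<in> {1..n}" unfolding e by (rule inv_into_into[OF m])
  qed
  have "k (\<sigma> i) < k (\<sigma> j)" if "1 \<le> i" "i < j" "j \<le> n" for i j
  proof (rule ccontr)
    assume "\<not> k (\<sigma> i) < k (\<sigma> j)"
    have iI: "i \<in> {1..n}" "j \<in> {1..n}" using that by auto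
    have "k (\<sigma> j) < k (\<sigma> i) \<or> k (\<sigma> j) = k (\<sigma> i)"
      using \<open>\<not> k (\<sigma> i) < k (\<sigma> j)\<close> by (simp add: not_less le_less)
    then show False
    proof
      assume "k (\<sigma> j) < k (\<sigma> i)"
      then have "pos (\<sigma> j) < pos (\<sigma> i)" using mono ps(2)[OF iI(1)] ps(2)[OF iI(2)] by blast
      then show False using ps(1)[OF iI(1)] ps(1)[OF iI(2)] that(2) by simp
    next
      assume "k (\<sigma> j) = k (\<sigma> i)"
      then have "\<sigma> j = \<sigma> i" by (rule inj_onD[OF inj _ ps(2)[OF iI(2)] ps(2)[OF iI(1)]])
      then have "pos (\<sigma> j) = pos (\<sigma> i)" by simp
      then show False using ps(1)[OF iI(1)] ps(1)[OF iI(2)] that(2) by simp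
    qed
  qed
  then show ?thesis using perm by blast
qed

lemma card_below:
  fixes k :: "nat \<Rightarrow> 'a::linorder"
  assumes perm: "\<sigma> permutes {1..n}"
    and mono: "\<forall>i j. 1 \<le> i \<longrightarrow> i < j \<longrightarrow> j \<le> n \<longrightarrow> k (\<sigma> i) < k (\<sigma> j)"
    and i: "i \<in> {1..n}"
  shows "card {z\<in>{1..n}. k z < k (\<sigma> i)} = i - 1"
proof -
  have "{z\<in>{1..n}. k z < k (\<sigma> i)} = \<sigma> ` {1..<i}"
  proof
    show "{z\<in>{1..n}. k z < k (\<sigma> i)} \<subseteq> \<sigma> ` {1..<i}"
    proof
      fix z assume z: "z \<in> {z\<in>{1..n}. k z < k (\<sigma> i)}"
      then obtain m where m: "m \<in> {1..n}" "z = \<sigma> m" using permutes_image[OF perm] by blast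
      have "m < i"
      proof (rule ccontr)
        assume "\<not> m < i"
        then have "m = i \<or> i < m" by auto
        then show False using mono m i z by (auto dest: order_less_asym)
      qed
      then show "z \<in> \<sigma> ` {1..<i}" using m by auto
    qed
    show "\<sigma> ` {1..<i} \<subseteq> {z\<in>{1..n}. k z < k (\<sigma> i)}"
    proof
      fix z assume "z \<in> \<sigma> ` {1..<i}"
      then obtain m where m: "1 \<le> m" "m < i" "z = \<sigma> m" by auto
      then have "\<sigma> m \<in> {1..n}" using i permutes_in_image[OF perm] by auto
      moreover have "k (\<sigma> m) < k (\<sigma> i)" using mono[rule_format, of m i] m i by simp
      ultimately show "z \<in> {z\<in>{1..n}. k z < k (\<sigma> i)}" using m by simp
    qed
  qed
  moreover have "card (\<sigma> ` {1..<i}) = card {1..<i}"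
    using permutes_inj[OF perm] by (intro card_image) (auto intro: inj_on_subset)
  ultimately show ?thesis by simp
qed

lemma sorted_perm_unique:
  fixes k :: "nat \<Rightarrow> 'a::linorder"
  assumes p1: "\<sigma> permutes {1..n}" and p2: "\<tau> permutes {1..n}"
    and m1: "\<forall>i j. 1 \<le> i \<longrightarrow> i < j \<longrightarrow> j \<le> n \<longrightarrow> k (\<sigma> i) < k (\<sigma> j)"
    and m2: "\<forall>i j. 1 \<le> i \<longrightarrow> i < j \<longrightarrow> j \<le> n \<longrightarrow> k (\<tau> i) < k (\<tau> j)"
  shows "\<sigma> = \<tau>"
proof
  fix i
  show "\<sigma> i = \<tau> i"
  proof (cases "i \<in> {1..n}")
    case True
    then have "\<tau> i \<in> {1..n}" using permutes_in_image[OF p2] by simp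
    then obtain m where m: "m \<in> {1..n}" "\<tau> i = \<sigma> m" using permutes_image[OF p1] by blast
    have "i - 1 = m - 1" using card_below[OF p2 m2 True] card_below[OF p1 m1 m(1)] m(2) by simp
    then have "m = i" using m True by auto
    then show ?thesis using m by simp
  next
    case False then show ?thesis using permutes_not_in[OF p1] permutes_not_in[OF p2] by simp
  qed
qed


definition redR :: "(nat \<times> nat) set \<Rightarrow> nat \<Rightarrow> bool" where
  "redR R y \<longleftrightarrow> (\<exists>x. (x, y) \<in> R)"

definition Dn :: "(nat \<times> nat) set \<Rightarrow> nat \<Rightarrow> nat set" where
  "Dn R y = {x. (x, y) \<in> R}"

definition uu :: "nat \<Rightarrow> (nat \<times> nat) set \<Rightarrow> nat \<Rightarrow> nat" where
  "uu n R x = card {y\<in>{1..n}. redR R y \<and> (x, y) \<notin> R}"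

definition vv :: "nat \<Rightarrow> (nat \<times> nat) set \<Rightarrow> nat \<Rightarrow> nat" where
  "vv n R y = card {y'\<in>{1..n}. redR R y' \<and> Dn R y' \<subset> Dn R y}"

definition key :: "nat \<Rightarrow> (nat \<times> nat) set \<Rightarrow> nat \<Rightarrow> nat \<times> nat" where
  "key n R x = (if redR R x then (2 * vv n R x + 1, x) else (2 * uu n R x, n - x))"

definition blues :: "nat \<Rightarrow> (nat \<times> nat) set \<Rightarrow> nat set" where
  "blues n R = {x\<in>{1..n}. \<not> redR R x}"

definition Fp :: "nat \<Rightarrow> (nat \<Rightarrow> nat) \<Rightarrow> nat set \<Rightarrow> (nat \<times> nat) set" where
  "Fp n \<sigma> Bl = {(\<sigma> i, \<sigma> j) | i j. 1 \<le> i \<and> i < j \<and> j \<le> n \<and> \<sigma> i \<in> Bl \<and> \<sigma> j \<notin> Bl}"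

lemma P_sub: "R \<in> free_nl_posets n \<Longrightarrow> (x, y) \<in> R \<Longrightarrow> x \<in> {1..n} \<and> y \<in> {1..n}"
  unfolding free_nl_posets_def strict_poset_on_def by auto

lemma P_nl: "R \<in> free_nl_posets n \<Longrightarrow> (x, y) \<in> R \<Longrightarrow> x < y"
  unfolding free_nl_posets_def naturally_labelled_def by auto

lemma P_3: "R \<in> free_nl_posets n \<Longrightarrow> (x, y) \<in> R \<Longrightarrow> (y, z) \<in> R \<Longrightarrow> False"
  unfolding free_nl_posets_def three_free_def by auto

lemma P_chain:
  assumes P: "R \<in> free_nl_posets n"
  shows "Dn R y1 \<subseteq> Dn R y2 \<or> Dn R y2 \<subseteq> Dn R y1"
proof (rule ccontr)
  assume "\<not> ?thesis"
  then obtain x1 x2 where h: "(x1,y1)\<in>R" "(x1,y2)\<notin>R" "(x2,y2)\<in>R" "(x2,y1)\<notin>R"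
    by (auto simp: Dn_def)
  have t: "\<And>a b c. (a,b)\<in>R \<Longrightarrow> (b,c)\<in>R \<Longrightarrow> False" using P_3[OF P] by blast
  have l: "x1 < y1" "x2 < y2" using P_nl[OF P] h by auto
  have d: "distinct [x1, y1, x2, y2]" using h l t by auto
  have "incomparable R x1 x2" "incomparable R x1 y2" "incomparable R y1 x2" "incomparable R y1 y2"
    unfolding incomparable_def using h t by blast+
  then have "\<not> two_plus_two_free R" unfolding two_plus_two_free_def using d h by blast
  then show False using P unfolding free_nl_posets_def by auto
qed

lemma red_in: "R \<in> free_nl_posets n \<Longrightarrow> redR R y \<Longrightarrow> y \<in> {1..n}"
  unfolding redR_def using P_sub by blast

lemma keyBR:
  assumes P: "R \<in> free_nl_posets n" and x: "\<not> redR R x" and y: "redR R y"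
  shows "(x, y) \<in> R \<Longrightarrow> key n R x < key n R y"
    and "(x, y) \<notin> R \<Longrightarrow> key n R y < key n R x"
proof -
  assume xy: "(x, y) \<in> R"
  have "{y'\<in>{1..n}. redR R y' \<and> (x, y') \<notin> R} \<subseteq> {y'\<in>{1..n}. redR R y' \<and> Dn R y' \<subset> Dn R y}"
  proof
    fix y' assume h: "y' \<in> {y'\<in>{1..n}. redR R y' \<and> (x, y') \<notin> R}"
    have "x \<in> Dn R y" "x \<notin> Dn R y'" using xy h by (auto simp: Dn_def)
    then have "Dn R y' \<subset> Dn R y" using P_chain[OF P, of y' y] by auto
    then show "y' \<in> {y'\<in>{1..n}. redR R y' \<and> Dn R y' \<subset> Dn R y}" using h by auto
  qed
  then have "uu n R x \<le> vv n R y" unfolding uu_def vv_def by (intro card_mono) auto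
  then show "key n R x < key n R y" using x y by (simp add: key_def)
next
  assume xy: "(x, y) \<notin> R"
  have "{y'\<in>{1..n}. redR R y' \<and> Dn R y' \<subset> Dn R y} \<subset> {y'\<in>{1..n}. redR R y' \<and> (x, y') \<notin> R}"
  proof
    show "{y'\<in>{1..n}. redR R y' \<and> Dn R y' \<subset> Dn R y} \<subseteq> {y'\<in>{1..n}. redR R y' \<and> (x, y') \<notin> R}"
      using xy by (auto simp: Dn_def)
    have "y \<in> {y'\<in>{1..n}. redR R y' \<and> (x, y') \<notin> R}" using xy y red_in[OF P y] by auto
    then show "{y'\<in>{1..n}. redR R y' \<and> Dn R y' \<subset> Dn R y} \<noteq> {y'\<in>{1..n}. redR R y' \<and> (x, y') \<notin> R}"
      by auto
  qed
  then have "vv n R y < uu n R x" unfolding uu_def vv_def by (intro psubset_card_mono) auto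
  then show "key n R y < key n R x" using x y by (simp add: key_def)
qed

lemma key_inj: "inj_on (key n R) {1..n}"
proof (rule inj_onI)
  fix x y assume h: "x \<in> {1..n}" "y \<in> {1..n}" "key n R x = key n R y"
  show "x = y"
  proof (cases "redR R x"; cases "redR R y")
    assume "redR R x" "redR R y" then show ?thesis using h by (simp add: key_def)
  next
    assume "redR R x" "\<not> redR R y" then show ?thesis using h by (simp add: key_def) presburger
  next
    assume "\<not> redR R x" "redR R y" then show ?thesis using h by (simp add: key_def) presburger
  next
    assume "\<not> redR R x" "\<not> redR R y" then show ?thesis using h by (simp add: key_def) (metis diff_diff_cancel)
  qed
qed


lemma G_in_B:
  assumes P: "R \<in> free_nl_posets n" and n: "n \<ge> 1"
    and perm: "\<sigma> permutes {1..n}"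
    and mono: "\<forall>i j. 1 \<le> i \<longrightarrow> i < j \<longrightarrow> j \<le> n \<longrightarrow> key n R (\<sigma> i) < key n R (\<sigma> j)"
  shows "(\<sigma>, blues n R) \<in> B_set n"
proof -
  let ?Bl = "blues n R"
  let ?k = "key n R"
  have inS: "\<And>i. \<sigma> i \<in> {1..n} \<longleftrightarrow> i \<in> {1..n}" using permutes_in_image[OF perm] .
  have surj: "\<exists>k\<in>{1..n}. z = \<sigma> k" if "z \<in> {1..n}" for z
    using permutes_image[OF perm] that by (metis imageE)
  have mono': "?k (\<sigma> a) < ?k (\<sigma> b)" if "1 \<le> a" "a < b" "b \<le> n" for a b
    using mono that by blast
  have between: False if h: "1 \<le> i" "i + 1 \<le> n" "z \<in> {1..n}" "?k (\<sigma> i) < ?k z" "?k z < ?k (\<sigma> (i+1))" for i z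
  proof -
    obtain m where m: "m \<in> {1..n}" "z = \<sigma> m" using surj h(3) by blast
    consider "m < i" | "m = i" | "m = i+1" | "m > i+1" by linarith
    then show False
    proof cases
      case 1 then show ?thesis using mono'[of m i] h m by auto
    next
      case 2 then show ?thesis using h m by auto
    next
      case 3 then show ?thesis using h m by auto
    next
      case 4 then show ?thesis using mono'[of "i+1" m] h m by auto
    qed
  qed
  have redblue: "redR R y \<Longrightarrow> \<not> redR R x" if "(x, y) \<in> R" for x y
    using that P_3[OF P] unfolding redR_def by blast
  have bl: "?Bl \<subseteq> {1..n}" by (auto simp: blues_def)
  have c1: "\<sigma> 1 \<in> ?Bl"
  proof (rule ccontr)
    assume a: "\<sigma> 1 \<notin> ?Bl"
    have s1: "\<sigma> 1 \<in> {1..n}" using inS n by simp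
    then have "redR R (\<sigma> 1)" using a by (simp add: blues_def)
    then obtain w where w: "(w, \<sigma> 1) \<in> R" by (auto simp: redR_def)
    have wr: "\<not> redR R w" using w redR_def P_3[OF P] by blast
    have kw: "?k w < ?k (\<sigma> 1)" using keyBR(1)[OF P wr \<open>redR R (\<sigma> 1)\<close> w] .
    obtain m where m: "m \<in> {1..n}" "w = \<sigma> m" using surj P_sub[OF P w] by blast
    show False
    proof (cases "m = 1")
      case True then show ?thesis using m wr \<open>redR R (\<sigma> 1)\<close> by simp
    next
      case False then show ?thesis using mono'[of 1 m] m kw by auto
    qed
  qed
  have c2: "\<forall>i. 1 \<le> i \<and> i + 1 \<le> n \<and> \<sigma> i \<in> ?Bl \<and> \<sigma> (i + 1) \<in> ?Bl \<longrightarrow> \<not> \<sigma> i < \<sigma> (i + 1)"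
  proof (intro allI impI)
    fix i assume h: "1 \<le> i \<and> i + 1 \<le> n \<and> \<sigma> i \<in> ?Bl \<and> \<sigma> (i + 1) \<in> ?Bl"
    define x1 where "x1 = \<sigma> i"
    define x2 where "x2 = \<sigma> (i+1)"
    have r: "\<not> redR R x1" "\<not> redR R x2" "x1 \<le> n" "x2 \<le> n" using h by (auto simp: blues_def x1_def x2_def)
    have "?k x1 < ?k x2" using mono'[of i "i+1"] h by (simp add: x1_def x2_def)
    then have kk: "uu n R x1 < uu n R x2 \<or> (uu n R x1 = uu n R x2 \<and> n - x1 < n - x2)"
      using r by (auto simp: key_def)
    show "\<not> \<sigma> i < \<sigma> (i + 1)"
    proof (cases "uu n R x1 < uu n R x2")
      case True
      have "\<not> {y\<in>{1..n}. redR R y \<and> (x2, y) \<notin> R} \<subseteq> {y\<in>{1..n}. redR R y \<and> (x1, y) \<notin> R}"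
      proof
        assume "{y\<in>{1..n}. redR R y \<and> (x2, y) \<notin> R} \<subseteq> {y\<in>{1..n}. redR R y \<and> (x1, y) \<notin> R}"
        then have "uu n R x2 \<le> uu n R x1" unfolding uu_def by (intro card_mono) auto
        then show False using True by simp
      qed
      then obtain y where y: "y \<in> {1..n}" "redR R y" "(x2, y) \<notin> R" "(x1, y) \<in> R" by blast
      have "?k x1 < ?k y" using keyBR(1)[OF P r(1) y(2) y(4)] .
      moreover have "?k y < ?k x2" using keyBR(2)[OF P r(2) y(2) y(3)] .
      ultimately show ?thesis using between[of i y] h y by (simp add: x1_def x2_def)
    next
      case False
      then have "n - x1 < n - x2" using kk by auto
      then show ?thesis using r by (simp add: x1_def x2_def)
    qed
  qed
  have c3: "\<forall>i. 1 \<le> i \<and> i + 1 \<le> n \<and> \<sigma> i \<notin> ?Bl \<and> \<sigma> (i + 1) \<notin> ?Bl \<longrightarrow> \<not> \<sigma> i > \<sigma> (i + 1)"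
  proof (intro allI impI)
    fix i assume h: "1 \<le> i \<and> i + 1 \<le> n \<and> \<sigma> i \<notin> ?Bl \<and> \<sigma> (i + 1) \<notin> ?Bl"
    define y1 where "y1 = \<sigma> i"
    define y2 where "y2 = \<sigma> (i+1)"
    have "y1 \<in> {1..n}" "y2 \<in> {1..n}" using h inS by (auto simp: y1_def y2_def)
    then have r: "redR R y1" "redR R y2" using h by (auto simp: blues_def y1_def y2_def)
    have "?k y1 < ?k y2" using mono'[of i "i+1"] h by (simp add: y1_def y2_def)
    then have kk: "vv n R y1 < vv n R y2 \<or> (vv n R y1 = vv n R y2 \<and> y1 < y2)"
      using r by (auto simp: key_def)
    show "\<not> \<sigma> i > \<sigma> (i + 1)"
    proof (cases "vv n R y1 < vv n R y2")
      case True
      have "\<not> Dn R y2 \<subseteq> Dn R y1"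
      proof
        assume "Dn R y2 \<subseteq> Dn R y1"
        then have "{y'\<in>{1..n}. redR R y' \<and> Dn R y' \<subset> Dn R y2} \<subseteq> {y'\<in>{1..n}. redR R y' \<and> Dn R y' \<subset> Dn R y1}"
          by auto
        then have "vv n R y2 \<le> vv n R y1" unfolding vv_def by (intro card_mono) auto
        then show False using True by simp
      qed
      then obtain x where x: "(x, y2) \<in> R" "(x, y1) \<notin> R" by (auto simp: Dn_def)
      have xr: "\<not> redR R x" using redblue[OF x(1) r(2)] .
      have xn: "x \<in> {1..n}" using P_sub[OF P x(1)] by simp
      have "?k y1 < ?k x" using keyBR(2)[OF P xr r(1) x(2)] .
      moreover have "?k x < ?k y2" using keyBR(1)[OF P xr r(2) x(1)] .
      ultimately show ?thesis using between[of i x] h xn by (simp add: y1_def y2_def)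
    next
      case False
      then show ?thesis using kk by (auto simp: y1_def y2_def)
    qed
  qed
  have c4: "\<forall>i j. 1 \<le> i \<and> i < j \<and> j \<le> n \<and> \<sigma> i \<in> ?Bl \<and> \<sigma> j \<notin> ?Bl \<longrightarrow> \<not> \<sigma> i > \<sigma> j"
  proof (intro allI impI)
    fix i j assume h: "1 \<le> i \<and> i < j \<and> j \<le> n \<and> \<sigma> i \<in> ?Bl \<and> \<sigma> j \<notin> ?Bl"
    have "\<sigma> j \<in> {1..n}" using h inS by auto
    then have r: "redR R (\<sigma> j)" "\<not> redR R (\<sigma> i)" using h by (auto simp: blues_def)
    have "?k (\<sigma> i) < ?k (\<sigma> j)" using mono'[of i j] h by simp
    then have "(\<sigma> i, \<sigma> j) \<in> R" using keyBR(2)[OF P r(2) r(1)] by (meson order_less_asym)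
    then show "\<not> \<sigma> i > \<sigma> j" using P_nl[OF P] by fastforce
  qed
  have bp: "(\<sigma>, ?Bl) \<in> bicoloured_perms n" using perm bl by (simp add: bicoloured_perms_def)
  show ?thesis unfolding B_set_def mem_Collect_eq prod.case
    using bp c1 c2 c3 c4 by blast
qed

lemma FG:
  assumes P: "R \<in> free_nl_posets n"
    and perm: "\<sigma> permutes {1..n}"
    and mono: "\<forall>i j. 1 \<le> i \<longrightarrow> i < j \<longrightarrow> j \<le> n \<longrightarrow> key n R (\<sigma> i) < key n R (\<sigma> j)"
  shows "Fp n \<sigma> (blues n R) = R"
proof
  show "Fp n \<sigma> (blues n R) \<subseteq> R"
  proof
    fix p assume "p \<in> Fp n \<sigma> (blues n R)"
    then obtain i j where h: "p = (\<sigma> i, \<sigma> j)" "1 \<le> i" "i < j" "j \<le> n" "\<sigma> i \<in> blues n R" "\<sigma> j \<notin> blues n R"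
      unfolding Fp_def by blast
    have "\<sigma> j \<in> {1..n}" using h permutes_in_image[OF perm] by auto
    then have r: "redR R (\<sigma> j)" "\<not> redR R (\<sigma> i)" using h by (auto simp: blues_def)
    have "key n R (\<sigma> i) < key n R (\<sigma> j)" using mono[rule_format, of i j] h by simp
    then have "(\<sigma> i, \<sigma> j) \<in> R" using keyBR(2)[OF P r(2) r(1)] by (meson order_less_asym)
    then show "p \<in> R" using h by simp
  qed
next
  show "R \<subseteq> Fp n \<sigma> (blues n R)"
  proof
    fix p assume pR: "p \<in> R"
    then obtain x y where xy: "p = (x, y)" "(x, y) \<in> R" by (cases p) auto
    have xn: "x \<in> {1..n}" "y \<in> {1..n}" using P_sub[OF P xy(2)] by auto
    have r: "redR R y" "\<not> redR R x" using xy P_3[OF P] unfolding redR_def by blast+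
    obtain i where i: "i \<in> {1..n}" "x = \<sigma> i" using permutes_image[OF perm] xn by (metis imageE)
    obtain j where j: "j \<in> {1..n}" "y = \<sigma> j" using permutes_image[OF perm] xn by (metis imageE)
    have kk: "key n R x < key n R y" using keyBR(1)[OF P r(2) r(1) xy(2)] .
    have "i < j"
    proof (rule ccontr)
      assume "\<not> i < j"
      then have "j = i \<or> j < i" by auto
      then show False
      proof
        assume "j = i" then show False using i j r by simp
      next
        assume "j < i"
        then have "key n R y < key n R x" using mono[rule_format, of j i] i j by simp
        then show False using kk by (meson order_less_asym)
      qed
    qed
    moreover have "x \<in> blues n R" "y \<notin> blues n R" using xn r by (auto simp: blues_def)
    ultimately show "p \<in> Fp n \<sigma> (blues n R)" unfolding Fp_def using xy i j by fastforce
  qed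
qed


lemma B_D:
  assumes "(\<sigma>, Bl) \<in> B_set n"
  shows "\<sigma> permutes {1..n}" "Bl \<subseteq> {1..n}" "\<sigma> 1 \<in> Bl"
    "\<And>i. 1 \<le> i \<Longrightarrow> i + 1 \<le> n \<Longrightarrow> \<sigma> i \<in> Bl \<Longrightarrow> \<sigma> (i + 1) \<in> Bl \<Longrightarrow> \<not> \<sigma> i < \<sigma> (i + 1)"
    "\<And>i. 1 \<le> i \<Longrightarrow> i + 1 \<le> n \<Longrightarrow> \<sigma> i \<notin> Bl \<Longrightarrow> \<sigma> (i + 1) \<notin> Bl \<Longrightarrow> \<not> \<sigma> i > \<sigma> (i + 1)"
    "\<And>i j. 1 \<le> i \<Longrightarrow> i < j \<Longrightarrow> j \<le> n \<Longrightarrow> \<sigma> i \<in> Bl \<Longrightarrow> \<sigma> j \<notin> Bl \<Longrightarrow> \<not> \<sigma> i > \<sigma> j"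
proof -
  have h: "((\<sigma>, Bl) \<in> bicoloured_perms n) \<and> \<sigma> 1 \<in> Bl \<and>
      (\<forall>i. 1 \<le> i \<and> i + 1 \<le> n \<and> \<sigma> i \<in> Bl \<and> \<sigma> (i + 1) \<in> Bl \<longrightarrow> \<not> \<sigma> i < \<sigma> (i + 1)) \<and>
      (\<forall>i. 1 \<le> i \<and> i + 1 \<le> n \<and> \<sigma> i \<notin> Bl \<and> \<sigma> (i + 1) \<notin> Bl \<longrightarrow> \<not> \<sigma> i > \<sigma> (i + 1)) \<and>
      (\<forall>i j. 1 \<le> i \<and> i < j \<and> j \<le> n \<and> \<sigma> i \<in> Bl \<and> \<sigma> j \<notin> Bl \<longrightarrow> \<not> \<sigma> i > \<sigma> j)"
    using assms unfolding B_set_def mem_Collect_eq prod.case .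
  have bp: "\<sigma> permutes {1..n} \<and> Bl \<subseteq> {1..n}"
    using conjunct1[OF h] unfolding bicoloured_perms_def mem_Collect_eq prod.case .
  show "\<sigma> permutes {1..n}" "Bl \<subseteq> {1..n}" "\<sigma> 1 \<in> Bl" using bp h by blast+
  show "\<And>i. 1 \<le> i \<Longrightarrow> i + 1 \<le> n \<Longrightarrow> \<sigma> i \<in> Bl \<Longrightarrow> \<sigma> (i + 1) \<in> Bl \<Longrightarrow> \<not> \<sigma> i < \<sigma> (i + 1)"
    using h by blast
  show "\<And>i. 1 \<le> i \<Longrightarrow> i + 1 \<le> n \<Longrightarrow> \<sigma> i \<notin> Bl \<Longrightarrow> \<sigma> (i + 1) \<notin> Bl \<Longrightarrow> \<not> \<sigma> i > \<sigma> (i + 1)"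
    using h by blast
  show "\<And>i j. 1 \<le> i \<Longrightarrow> i < j \<Longrightarrow> j \<le> n \<Longrightarrow> \<sigma> i \<in> Bl \<Longrightarrow> \<sigma> j \<notin> Bl \<Longrightarrow> \<not> \<sigma> i > \<sigma> j"
    using h by blast
qed

lemma Fp_elem:
  "(x, y) \<in> Fp n \<sigma> Bl \<Longrightarrow> \<exists>i j. x = \<sigma> i \<and> y = \<sigma> j \<and> 1 \<le> i \<and> i < j \<and> j \<le> n \<and> \<sigma> i \<in> Bl \<and> \<sigma> j \<notin> Bl"
  unfolding Fp_def by blast

lemma Fp_mem:
  assumes perm: "\<sigma> permutes {1..n}" and "a \<in> {1..n}" "b \<in> {1..n}"
  shows "(\<sigma> a, \<sigma> b) \<in> Fp n \<sigma> Bl \<longleftrightarrow> a < b \<and> \<sigma> a \<in> Bl \<and> \<sigma> b \<notin> Bl"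
proof
  assume "(\<sigma> a, \<sigma> b) \<in> Fp n \<sigma> Bl"
  then obtain i j where h: "\<sigma> a = \<sigma> i" "\<sigma> b = \<sigma> j" "i < j" "\<sigma> i \<in> Bl" "\<sigma> j \<notin> Bl"
    using Fp_elem by blast
  have "a = i" "b = j" using h(1,2) permutes_inj[OF perm] by (auto dest: injD)
  then show "a < b \<and> \<sigma> a \<in> Bl \<and> \<sigma> b \<notin> Bl" using h by simp
next
  assume "a < b \<and> \<sigma> a \<in> Bl \<and> \<sigma> b \<notin> Bl"
  then have "1 \<le> a \<and> a < b \<and> b \<le> n \<and> \<sigma> a \<in> Bl \<and> \<sigma> b \<notin> Bl" using assms(2,3) by auto
  then show "(\<sigma> a, \<sigma> b) \<in> Fp n \<sigma> Bl" unfolding Fp_def by blast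
qed

lemma F_in_P:
  assumes B: "(\<sigma>, Bl) \<in> B_set n"
  shows "Fp n \<sigma> Bl \<in> free_nl_posets n"
proof -
  let ?R = "Fp n \<sigma> Bl"
  note perm = B_D(1)[OF B]
  have col: "x \<in> Bl \<and> y \<notin> Bl" if "(x, y) \<in> ?R" for x y
    using Fp_elem[OF that] by blast
  have sub: "?R \<subseteq> {1..n} \<times> {1..n}"
  proof
    fix p assume "p \<in> ?R"
    then obtain x y where "p = (x, y)" "(x,y) \<in> ?R" by (cases p) auto
    then show "p \<in> {1..n} \<times> {1..n}" using Fp_elem[of x y n \<sigma> Bl] permutes_in_image[OF perm] by force
  qed
  have sp: "strict_poset_on n ?R"
    unfolding strict_poset_on_def irrefl_def trans_def using sub col by blast
  have nl: "naturally_labelled ?R"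
    unfolding naturally_labelled_def
  proof (intro allI impI)
    fix x y assume "(x, y) \<in> ?R"
    then obtain i j where "x = \<sigma> i" "y = \<sigma> j" "1 \<le> i" "i < j" "j \<le> n" "\<sigma> i \<in> Bl" "\<sigma> j \<notin> Bl"
      using Fp_elem by blast
    then show "x < y" using B_D(6)[OF B, of i j] by (metis linorder_neqE_nat)
  qed
  have tf: "three_free ?R" unfolding three_free_def using col by blast
  have tp: "two_plus_two_free ?R"
    unfolding two_plus_two_free_def
  proof
    assume "\<exists>i j k l. distinct [i, j, k, l] \<and> (i, j) \<in> ?R \<and> (k, l) \<in> ?R \<and>
      incomparable ?R i k \<and> incomparable ?R i l \<and> incomparable ?R j k \<and> incomparable ?R j l"
    then obtain i j k l where h: "(i, j) \<in> ?R" "(k, l) \<in> ?R" "(i, l) \<notin> ?R" "(k, j) \<notin> ?R"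
      unfolding incomparable_def by blast
    obtain a b where ab: "i = \<sigma> a" "j = \<sigma> b" "1 \<le> a" "a < b" "b \<le> n" "\<sigma> a \<in> Bl" "\<sigma> b \<notin> Bl"
      using Fp_elem[OF h(1)] by blast
    obtain c d where cd: "k = \<sigma> c" "l = \<sigma> d" "1 \<le> c" "c < d" "d \<le> n" "\<sigma> c \<in> Bl" "\<sigma> d \<notin> Bl"
      using Fp_elem[OF h(2)] by blast
    have "\<not> a < d" using Fp_mem[OF perm, of a d Bl] h(3) ab cd by auto
    moreover have "\<not> c < b" using Fp_mem[OF perm, of c b Bl] h(4) ab cd by auto
    ultimately show False using ab cd by linarith
  qed
  show ?thesis unfolding free_nl_posets_def using sp nl tf tp by blast
qed

lemma F_blues:
  assumes B: "(\<sigma>, Bl) \<in> B_set n"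
  shows "blues n (Fp n \<sigma> Bl) = Bl"
proof
  note perm = B_D(1)[OF B]
  show "blues n (Fp n \<sigma> Bl) \<subseteq> Bl"
  proof
    fix x assume x: "x \<in> blues n (Fp n \<sigma> Bl)"
    then have xn: "x \<in> {1..n}" and nr: "\<not> redR (Fp n \<sigma> Bl) x" by (auto simp: blues_def)
    obtain j where j: "j \<in> {1..n}" "x = \<sigma> j" using permutes_image[OF perm] xn by (metis imageE)
    show "x \<in> Bl"
    proof (rule ccontr)
      assume xb: "x \<notin> Bl"
      then have "j \<noteq> 1" using B_D(3)[OF B] j by auto
      then have "(\<sigma> 1, \<sigma> j) \<in> Fp n \<sigma> Bl" using Fp_mem[OF perm, of 1 j Bl] j xb B_D(3)[OF B] by auto
      then show False using nr j by (auto simp: redR_def)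
    qed
  qed
  show "Bl \<subseteq> blues n (Fp n \<sigma> Bl)"
  proof
    fix x assume "x \<in> Bl"
    then show "x \<in> blues n (Fp n \<sigma> Bl)" using B_D(2)[OF B] Fp_elem[of _ x n \<sigma> Bl]
      unfolding blues_def redR_def by blast
  qed
qed

lemma F_mono:
  assumes B: "(\<sigma>, Bl) \<in> B_set n"
  shows "\<forall>i j. 1 \<le> i \<longrightarrow> i < j \<longrightarrow> j \<le> n \<longrightarrow> key n (Fp n \<sigma> Bl) (\<sigma> i) < key n (Fp n \<sigma> Bl) (\<sigma> j)"
proof -
  define R where "R = Fp n \<sigma> Bl"
  note perm = B_D(1)[OF B]
  have P: "R \<in> free_nl_posets n" using F_in_P[OF B] by (simp add: R_def)
  have bl: "blues n R = Bl" using F_blues[OF B] by (simp add: R_def)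
  have inS: "\<And>i. \<sigma> i \<in> {1..n} \<longleftrightarrow> i \<in> {1..n}" using permutes_in_image[OF perm] .
  have red: "redR R (\<sigma> m) \<longleftrightarrow> \<sigma> m \<notin> Bl" if "m \<in> {1..n}" for m
    using bl that inS[of m] unfolding blues_def by blast
  have surj: "\<exists>k\<in>{1..n}. z = \<sigma> k" if "z \<in> {1..n}" for z
    using permutes_image[OF perm] that by (metis imageE)
  have mem: "(\<sigma> a, \<sigma> b) \<in> R \<longleftrightarrow> a < b \<and> \<sigma> a \<in> Bl \<and> \<sigma> b \<notin> Bl" if "a \<in> {1..n}" "b \<in> {1..n}" for a b
    unfolding R_def using Fp_mem[OF perm that] .
  have inj: "\<sigma> a = \<sigma> b \<Longrightarrow> a = b" for a b using permutes_inj[OF perm] by (auto dest: injD)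
  have step: "key n R (\<sigma> i) < key n R (\<sigma> (i + 1))" if i: "1 \<le> i" "i + 1 \<le> n" for i
  proof -
    have iI: "i \<in> {1..n}" "i + 1 \<in> {1..n}" using i by auto
    consider "\<sigma> i \<in> Bl" "\<sigma> (i+1) \<in> Bl" | "\<sigma> i \<notin> Bl" "\<sigma> (i+1) \<notin> Bl"
      | "\<sigma> i \<in> Bl" "\<sigma> (i+1) \<notin> Bl" | "\<sigma> i \<notin> Bl" "\<sigma> (i+1) \<in> Bl" by blast
    then show ?thesis
    proof cases
      case 1
      have "\<sigma> i \<noteq> \<sigma> (i+1)" using inj[of i "i+1"] by auto
      then have lt: "\<sigma> (i+1) < \<sigma> i" using B_D(4)[OF B i 1] by linarith
      have "\<sigma> i \<in> {1..n}" using iI(1) inS[of i] by blast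
      then have le: "\<sigma> i \<le> n" by simp
      have "{y\<in>{1..n}. redR R y \<and> (\<sigma> i, y) \<notin> R} = {y\<in>{1..n}. redR R y \<and> (\<sigma> (i+1), y) \<notin> R}"
      proof (rule set_eqI, rule iffI)
        fix y assume y: "y \<in> {y\<in>{1..n}. redR R y \<and> (\<sigma> i, y) \<notin> R}"
        then have yn: "y \<in> {1..n}" and yr: "redR R y" and yR: "(\<sigma> i, y) \<notin> R" by simp_all
        obtain m where m: "m \<in> {1..n}" "y = \<sigma> m" using surj yn by blast
        have mB: "\<sigma> m \<notin> Bl" using red[OF m(1)] yr m(2) by simp
        have "m \<noteq> i + 1" using mB 1 by auto
        have "\<not> (i < m)" using yR mem[OF iI(1) m(1)] m(2) 1 mB by simp
        then have "\<not> (i + 1 < m)" by simp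
        then have "(\<sigma> (i+1), y) \<notin> R" using mem[OF iI(2) m(1)] m(2) by simp
        then show "y \<in> {y\<in>{1..n}. redR R y \<and> (\<sigma> (i+1), y) \<notin> R}" using yn yr by simp
      next
        fix y assume y: "y \<in> {y\<in>{1..n}. redR R y \<and> (\<sigma> (i+1), y) \<notin> R}"
        then have yn: "y \<in> {1..n}" and yr: "redR R y" and yR: "(\<sigma> (i+1), y) \<notin> R" by simp_all
        obtain m where m: "m \<in> {1..n}" "y = \<sigma> m" using surj yn by blast
        have mB: "\<sigma> m \<notin> Bl" using red[OF m(1)] yr m(2) by simp
        have mi: "m \<noteq> i + 1" using mB 1 by auto
        have "\<not> (i + 1 < m)" using yR mem[OF iI(2) m(1)] m(2) 1 mB by simp
        then have "\<not> (i < m)" using mi by simp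
        then have "(\<sigma> i, y) \<notin> R" using mem[OF iI(1) m(1)] m(2) by simp
        then show "y \<in> {y\<in>{1..n}. redR R y \<and> (\<sigma> i, y) \<notin> R}" using yn yr by simp
      qed
      then have "uu n R (\<sigma> i) = uu n R (\<sigma> (i+1))" by (simp add: uu_def)
      moreover have "\<not> redR R (\<sigma> i)" "\<not> redR R (\<sigma> (i+1))" using red iI 1 by auto
      ultimately show ?thesis using lt le by (simp add: key_def)
    next
      case 2
      have "\<sigma> i \<noteq> \<sigma> (i+1)" using inj[of i "i+1"] by auto
      then have lt: "\<sigma> i < \<sigma> (i+1)" using B_D(5)[OF B i 2] by linarith
      have "Dn R (\<sigma> i) = Dn R (\<sigma> (i+1))"
      proof (rule set_eqI, rule iffI)
        fix x assume x: "x \<in> Dn R (\<sigma> i)"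
        then have "(x, \<sigma> i) \<in> R" by (simp add: Dn_def)
        then have "x \<in> {1..n}" using P_sub[OF P] by blast
        then obtain m where m: "m \<in> {1..n}" "x = \<sigma> m" using surj by blast
        have "(\<sigma> m, \<sigma> i) \<in> R" using x m by (simp add: Dn_def)
        then have "m < i" "\<sigma> m \<in> Bl" using mem[of m i] m iI by auto
        then show "x \<in> Dn R (\<sigma> (i+1))" using mem[of m "i+1"] m iI 2 by (simp add: Dn_def)
      next
        fix x assume x: "x \<in> Dn R (\<sigma> (i+1))"
        then have "(x, \<sigma> (i+1)) \<in> R" by (simp add: Dn_def)
        then have "x \<in> {1..n}" using P_sub[OF P] by blast
        then obtain m where m: "m \<in> {1..n}" "x = \<sigma> m" using surj by blast
        have "(\<sigma> m, \<sigma> (i+1)) \<in> R" using x m by (simp add: Dn_def)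
        then have "m < i + 1" "\<sigma> m \<in> Bl" using mem[of m "i+1"] m iI by auto
        moreover have "m \<noteq> i" using \<open>\<sigma> m \<in> Bl\<close> 2 by auto
        ultimately have "m < i" by simp
        then show "x \<in> Dn R (\<sigma> i)" using mem[of m i] m iI 2 \<open>\<sigma> m \<in> Bl\<close> by (simp add: Dn_def)
      qed
      then have "vv n R (\<sigma> i) = vv n R (\<sigma> (i+1))" by (simp add: vv_def)
      moreover have "redR R (\<sigma> i)" "redR R (\<sigma> (i+1))" using red iI 2 by auto
      ultimately show ?thesis using lt by (simp add: key_def)
    next
      case 3
      have "(\<sigma> i, \<sigma> (i+1)) \<in> R" using mem iI 3 by simp
      moreover have "\<not> redR R (\<sigma> i)" "redR R (\<sigma> (i+1))" using red iI 3 by auto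
      ultimately show ?thesis using keyBR(1)[OF P] by blast
    next
      case 4
      have "(\<sigma> (i+1), \<sigma> i) \<notin> R" using mem iI 4 by simp
      moreover have "redR R (\<sigma> i)" "\<not> redR R (\<sigma> (i+1))" using red iI 4 by auto
      ultimately show ?thesis using keyBR(2)[OF P] by blast
    qed
  qed
  show ?thesis unfolding R_def[symmetric]
    using consec_mono[of n "\<lambda>i. key n R (\<sigma> i)"] step by blast
qed

theorem proposition8:
  fixes n :: nat
  assumes "n \<ge> 1"
  shows "\<exists>f. bij_betw f (free_nl_posets n) (B_set n)"
proof -
  define f where "f = (\<lambda>p. Fp n (fst p) (snd p))"
  have maps: "f ` B_set n \<subseteq> free_nl_posets n"
  proof
    fix R assume "R \<in> f ` B_set n"
    then obtain p where p: "p \<in> B_set n" "R = f p" by blast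
    obtain \<sigma> Bl where ps: "p = (\<sigma>, Bl)" by (cases p)
    have "(\<sigma>, Bl) \<in> B_set n" using p(1) unfolding ps .
    then have "Fp n \<sigma> Bl \<in> free_nl_posets n" by (rule F_in_P)
    then show "R \<in> free_nl_posets n" using p ps by (simp add: f_def)
  qed
  have inj: "inj_on f (B_set n)"
  proof (rule inj_onI)
    fix p q assume p: "p \<in> B_set n" and q: "q \<in> B_set n" and e: "f p = f q"
    obtain \<sigma> Bl where ps: "p = (\<sigma>, Bl)" by (cases p)
    obtain \<tau> Cl where qs: "q = (\<tau>, Cl)" by (cases q)
    have B1: "(\<sigma>, Bl) \<in> B_set n" using p unfolding ps .
    have B2: "(\<tau>, Cl) \<in> B_set n" using q unfolding qs .
    have eq: "Fp n \<sigma> Bl = Fp n \<tau> Cl" using e ps qs by (simp add: f_def)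
    have "Bl = Cl" using F_blues[OF B1] F_blues[OF B2] eq by simp
    moreover have "\<sigma> = \<tau>"
      using sorted_perm_unique[OF B_D(1)[OF B1] B_D(1)[OF B2] F_mono[OF B1]] F_mono[OF B2] eq by simp
    ultimately show "p = q" using ps qs by simp
  qed
  have onto: "free_nl_posets n \<subseteq> f ` B_set n"
  proof
    fix R assume P: "R \<in> free_nl_posets n"
    obtain \<sigma> where s: "\<sigma> permutes {1..n}"
      "\<forall>i j. 1 \<le> i \<longrightarrow> i < j \<longrightarrow> j \<le> n \<longrightarrow> key n R (\<sigma> i) < key n R (\<sigma> j)"
      using exists_sorted_perm[OF key_inj] by blast
    have "(\<sigma>, blues n R) \<in> B_set n" using G_in_B[OF P assms s] .
    moreover have "f (\<sigma>, blues n R) = R" using FG[OF P s] by (simp add: f_def)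
    ultimately show "R \<in> f ` B_set n" by (metis rev_image_eqI)
  qed
  have "bij_betw f (B_set n) (free_nl_posets n)"
    unfolding bij_betw_def using inj maps onto by blast
  then show ?thesis using bij_betw_inv_into by blast
qed

end
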